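(* Let $X_j$, $j\in M$, be discrete random variables with $X_j\in\{0,\dots,r_j\}$, completely independent, with strictly positive joint probability vector $\pi=p(M)$. Let $t,h\subseteq M$ be disjoint, $j_h$ a vector of categories of the variables in $h$ all different from $0$, and $a\subseteq M$. Then: (a) the column space of $P_a G_{t,h}(j_h)$ is contained in the column space of $G_r$, where $r=a\cap(t\cup h)$; (b) if $t\subseteq a$ and $a\cap h=\emptyset$, then $P_aG_{t,h}(j_h)=G_t\,P(X_h=j_h)$.
   Context: Cells are in lexicographic order. $D_\pi=\mathrm{diag}(\pi)$. For $a\subseteq M$, $X_a=\bigotimes_{j\in M}X_j$ with $X_j$ the identity of order $r_j+1$ if $j\in a$ and $X_j=\mathbf 1_{r_j+1}$ otherwise, and $P_a=X_a(X_a'D_\pi X_a)^{-1}X_a'D_\pi$. For $r\subseteq M$, $G_r=\bigotimes_{j\in M}G_j$ with $G_j$ the identity of order $r_j+1$ without its first column if $j\in r$ and $G_j=\mathbf 1_{r_j+1}$ otherwise (so $G_\emptyset=\mathbf 1$). $G_{t,h}(j_h)=\bigotimes_{j\in M}B_j$ where $B_j$ is the identity of order $r_j+1$ without its first column if $j\in t$, the unit vector of length $r_j+1$ with a $1$ in the position of category $(j_h)_j$ if $j\in h$, and $\mathbf 1_{r_j+1}$ otherwise; i.e. the submatrix of $G_{t\cup h}$ with the variables in $h$ fixed to $j_h$. *)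

theory Defs
  imports Complex_Main "HOL-Library.FuncSet"
begin

(* Matrices are represented as real-valued functions of a row index and a column
   index; every operation is given the (finite) index set it sums over. *)

definition mmul :: "'j set \<Rightarrow> ('i \<Rightarrow> 'j \<Rightarrow> real) \<Rightarrow> ('j \<Rightarrow> 'k \<Rightarrow> real) \<Rightarrow> 'i \<Rightarrow> 'k \<Rightarrow> real" where
  "mmul J A B = (\<lambda>i k. \<Sum>j\<in>J. A i j * B j k)"

definition mtr :: "('i \<Rightarrow> 'j \<Rightarrow> real) \<Rightarrow> 'j \<Rightarrow> 'i \<Rightarrow> real" where
  "mtr A = (\<lambda>j i. A i j)"

definition mdiag :: "('i \<Rightarrow> real) \<Rightarrow> 'i \<Rightarrow> 'i \<Rightarrow> real" where
  "mdiag p = (\<lambda>i i'. if i = i' then p i else 0)"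

definition minv :: "'i set \<Rightarrow> ('i \<Rightarrow> 'i \<Rightarrow> real) \<Rightarrow> 'i \<Rightarrow> 'i \<Rightarrow> real" where
  "minv K A = (SOME B. (\<forall>i\<in>K. \<forall>k\<in>K. mmul K A B i k = (if i = k then 1 else 0)) \<and>
                       (\<forall>i\<in>K. \<forall>k\<in>K. mmul K B A i k = (if i = k then 1 else 0)))"

definition cells :: "'v set \<Rightarrow> ('v \<Rightarrow> nat) \<Rightarrow> ('v \<Rightarrow> nat) set" where
  "cells M r = PiE M (\<lambda>j. {0..r j})"

(* Kronecker product of the family B j (j \<in> M); rows/columns are indexed by
   tuples (functions on M), i.e. the index-free form of the Kronecker product. *)
definition kron :: "'v set \<Rightarrow> ('v \<Rightarrow> nat \<Rightarrow> nat \<Rightarrow> real) \<Rightarrow> ('v \<Rightarrow> nat) \<Rightarrow> ('v \<Rightarrow> nat) \<Rightarrow> real" where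
  "kron M B = (\<lambda>x y. \<Prod>j\<in>M. B j (x j) (y j))"

(* X_a : factor j is the identity of order r_j+1 (j \<in> a) or the all-ones column *)
definition Xfac :: "'v set \<Rightarrow> 'v \<Rightarrow> nat \<Rightarrow> nat \<Rightarrow> real" where
  "Xfac a j = (\<lambda>u v. if j \<in> a then (if u = v then 1 else 0) else 1)"

definition Xcols :: "'v set \<Rightarrow> 'v set \<Rightarrow> ('v \<Rightarrow> nat) \<Rightarrow> ('v \<Rightarrow> nat) set" where
  "Xcols M a r = PiE M (\<lambda>j. if j \<in> a then {0..r j} else {0})"

definition Xmat :: "'v set \<Rightarrow> 'v set \<Rightarrow> ('v \<Rightarrow> nat) \<Rightarrow> ('v \<Rightarrow> nat) \<Rightarrow> real" where
  "Xmat M a = kron M (Xfac a)"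

definition Pmat :: "'v set \<Rightarrow> ('v \<Rightarrow> nat) \<Rightarrow> (('v \<Rightarrow> nat) \<Rightarrow> real) \<Rightarrow> 'v set
                    \<Rightarrow> ('v \<Rightarrow> nat) \<Rightarrow> ('v \<Rightarrow> nat) \<Rightarrow> real" where
  "Pmat M r p a =
     (let C = cells M r; Ca = Xcols M a r; X = Xmat M a;
          XtD = mmul C (mtr X) (mdiag p)
      in mmul Ca X (mmul Ca (minv Ca (mmul C XtD X)) XtD))"

(* G_s : factor j is the identity of order r_j+1 without its first column (j \<in> s),
   otherwise the all-ones column *)
definition Gfac :: "'v set \<Rightarrow> 'v \<Rightarrow> nat \<Rightarrow> nat \<Rightarrow> real" where
  "Gfac s j = (\<lambda>u v. if j \<in> s then (if u = v then 1 else 0) else 1)"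

definition Gcols :: "'v set \<Rightarrow> 'v set \<Rightarrow> ('v \<Rightarrow> nat) \<Rightarrow> ('v \<Rightarrow> nat) set" where
  "Gcols M s r = PiE M (\<lambda>j. if j \<in> s then {1..r j} else {0})"

definition Gmat :: "'v set \<Rightarrow> 'v set \<Rightarrow> ('v \<Rightarrow> nat) \<Rightarrow> ('v \<Rightarrow> nat) \<Rightarrow> real" where
  "Gmat M s = kron M (Gfac s)"

definition GTHfac :: "'v set \<Rightarrow> 'v set \<Rightarrow> ('v \<Rightarrow> nat) \<Rightarrow> 'v \<Rightarrow> nat \<Rightarrow> nat \<Rightarrow> real" where
  "GTHfac t h jh j = (\<lambda>u v. if j \<in> t then (if u = v then 1 else 0)
                            else if j \<in> h then (if u = jh j then 1 else 0) else 1)"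

(* its columns: {1..r j} for j \<in> t, a single column otherwise (= Gcols M t r) *)
definition GTHmat :: "'v set \<Rightarrow> 'v set \<Rightarrow> 'v set \<Rightarrow> ('v \<Rightarrow> nat) \<Rightarrow> ('v \<Rightarrow> nat) \<Rightarrow> ('v \<Rightarrow> nat) \<Rightarrow> real" where
  "GTHmat M t h jh = kron M (GTHfac t h jh)"

definition prob_ev :: "(('v \<Rightarrow> nat) \<Rightarrow> real) \<Rightarrow> ('v \<Rightarrow> nat) set \<Rightarrow> (('v \<Rightarrow> nat) \<Rightarrow> bool) \<Rightarrow> real" where
  "prob_ev p C E = (\<Sum>z\<in>{z\<in>C. E z}. p z)"

definition completely_independent :: "'v set \<Rightarrow> ('v \<Rightarrow> nat) \<Rightarrow> (('v \<Rightarrow> nat) \<Rightarrow> real) \<Rightarrow> bool" where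
  "completely_independent M r p \<longleftrightarrow>
     (\<forall>S\<subseteq>M. \<forall>x\<in>cells M r.
        prob_ev p (cells M r) (\<lambda>z. \<forall>j\<in>S. z j = x j)
        = (\<Prod>j\<in>S. prob_ev p (cells M r) (\<lambda>z. z j = x j)))"

end

theory Submission imports Defs begin

lemma prod_ind:
  assumes "finite M"
  shows "(\<Prod>j\<in>M. if P j then 1 else (0::real)) = (if \<forall>j\<in>M. P j then 1 else 0)"
proof (cases "\<forall>j\<in>M. P j")
  case True then show ?thesis by simp
next
  case False
  then obtain j where "j \<in> M" "\<not> P j" by blast
  then show ?thesis using assms False by (simp add: prod_zero)
qed

lemma sum_single:
  assumes "finite S" "c0 \<in> S" "\<And>c. c \<in> S \<Longrightarrow> c \<noteq> c0 \<Longrightarrow> f c = 0"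
  shows "sum f S = f c0"
proof -
  have "sum f S = f c0 + sum f (S - {c0})" using assms by (simp add: sum.remove)
  moreover have "sum f (S - {c0}) = 0" using assms by (intro sum.neutral) auto
  ultimately show ?thesis by simp
qed

lemma Xmat_eq:
  assumes "finite M" "a \<subseteq> M"
  shows "Xmat M a x c = (if \<forall>j\<in>a. x j = c j then 1 else 0)"
proof -
  have "Xmat M a x c = (\<Prod>j\<in>M. if (j \<in> a \<longrightarrow> x j = c j) then 1 else (0::real))"
    unfolding Xmat_def kron_def Xfac_def by (intro prod.cong) auto
  also have "\<dots> = (if \<forall>j\<in>a. x j = c j then 1 else 0)"
    using assms by (subst prod_ind) auto
  finally show ?thesis .
qed

lemma Gmat_eq:
  assumes "finite M" "a \<subseteq> M"
  shows "Gmat M a x c = (if \<forall>j\<in>a. x j = c j then 1 else 0)"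
proof -
  have "Gmat M a x c = (\<Prod>j\<in>M. if (j \<in> a \<longrightarrow> x j = c j) then 1 else (0::real))"
    unfolding Gmat_def kron_def Gfac_def by (intro prod.cong) auto
  also have "\<dots> = (if \<forall>j\<in>a. x j = c j then 1 else 0)"
    using assms by (subst prod_ind) auto
  finally show ?thesis .
qed

lemma GTH_eq:
  assumes "finite M" "t \<subseteq> M" "h \<subseteq> M" "t \<inter> h = {}"
  shows "GTHmat M t h jh z y = (if \<forall>j\<in>t\<union>h. z j = (if j \<in> t then y j else jh j) then 1 else 0)"
proof -
  have "GTHmat M t h jh z y = (\<Prod>j\<in>M. if ((j \<in> t \<longrightarrow> z j = y j) \<and> (j \<notin> t \<and> j \<in> h \<longrightarrow> z j = jh j)) then 1 else (0::real))"
    unfolding GTHmat_def kron_def GTHfac_def by (intro prod.cong) auto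
  also have "\<dots> = (if \<forall>j\<in>t\<union>h. z j = (if j \<in> t then y j else jh j) then 1 else 0)"
    using assms by (subst prod_ind) auto
  finally show ?thesis .
qed

lemma prob_ev_pos:
  assumes "finite C" "x \<in> C" "\<forall>z\<in>C. p z > 0" "E x"
  shows "prob_ev p C E > 0"
  unfolding prob_ev_def using assms
  by (intro sum_pos2[of _ x]) (auto intro: less_imp_le)

lemma prob_ev_cong:
  assumes "\<And>z. z \<in> C \<Longrightarrow> E z = E' z"
  shows "prob_ev p C E = prob_ev p C E'"
  unfolding prob_ev_def using assms by (metis (mono_tags, lifting) Collect_cong)

lemma prob_ev_sum:
  assumes "finite C"
  shows "prob_ev p C E = (\<Sum>z\<in>C. if E z then p z else 0)"
  unfolding prob_ev_def using assms by (simp add: sum.inter_filter)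

lemma P_eq:
  fixes M :: "'v set"
  assumes fin: "finite M" and aM: "a \<subseteq> M" and pos: "\<forall>x\<in>cells M r. p x > 0"
    and x: "x \<in> cells M r" and y: "y \<in> cells M r"
  shows "Pmat M r p a x y = (if \<forall>j\<in>a. y j = x j
           then p y / prob_ev p (cells M r) (\<lambda>z. \<forall>j\<in>a. z j = x j) else 0)"
proof -
  define C where "C = cells M r"
  define Ca where "Ca = Xcols M a r"
  define X where "X = Xmat M a"
  define XtD where "XtD = mmul C (mtr X) (mdiag p)"
  define pa where "pa c = prob_ev p C (\<lambda>z. \<forall>j\<in>a. z j = c j)" for c
  define A where "A = mmul C XtD X"
  define B where "B = minv Ca A"
  have finC: "finite C" unfolding C_def cells_def using fin by (simp add: finite_PiE)
  have finCa: "finite Ca" unfolding Ca_def Xcols_def using fin by (simp add: finite_PiE)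
  have CaC: "Ca \<subseteq> C" unfolding Ca_def C_def Xcols_def cells_def
    apply (clarsimp simp: PiE_iff) by (metis atLeastAtMost_iff singletonD zero_le)
  have Xe: "X u c = (if \<forall>j\<in>a. u j = c j then 1 else 0)" for u c
    unfolding X_def using Xmat_eq[OF fin aM] .
  have XtDe: "XtD c z = (if z \<in> C then X z c * p z else 0)" for c z
  proof -
    have "XtD c z = (\<Sum>w\<in>C. if w = z then X z c * p z else 0)"
      unfolding XtD_def mmul_def mtr_def mdiag_def by (intro sum.cong) auto
    then show ?thesis using finC by simp
  qed
  have pa_pos: "pa c > 0" if "c \<in> C" for c
    unfolding pa_def using that finC pos C_def by (intro prob_ev_pos) auto
  have Ae: "A c c' = (if c = c' then pa c else 0)" if "c \<in> Ca" "c' \<in> Ca" for c c'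
  proof -
    have "A c c' = (\<Sum>z\<in>C. X z c * p z * X z c')"
      unfolding A_def mmul_def XtDe by (intro sum.cong) auto
    also have "\<dots> = (if c = c' then pa c else 0)"
    proof (cases "c = c'")
      case True
      then show ?thesis unfolding pa_def prob_ev_sum[OF finC] Xe
        by (simp, intro sum.cong) auto
    next
      case False
      have "\<exists>j\<in>a. c j \<noteq> c' j"
      proof (rule ccontr)
        assume "\<not> ?thesis"
        then have "c j = c' j" for j
          using that aM unfolding Ca_def Xcols_def
          by (cases "j \<in> M"; cases "j \<in> a") (force simp: PiE_iff extensional_def)+
        then show False using False by auto
      qed
      then have "X z c * X z c' = 0" for z unfolding Xe by auto
      then have "X z c * p z * X z c' = 0" for z by (metis mult.commute mult_zero_left mult.assoc)
      then show ?thesis using False by (simp del: mult_eq_0_iff)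
    qed
    finally show ?thesis .
  qed
  define D where "D c c' = (if c = c' then 1 / pa c else 0)" for c c'
  have invD: "(\<forall>i\<in>Ca. \<forall>k\<in>Ca. mmul Ca A D i k = (if i = k then 1 else 0)) \<and>
              (\<forall>i\<in>Ca. \<forall>k\<in>Ca. mmul Ca D A i k = (if i = k then 1 else 0))"
  proof (intro conjI ballI)
    fix i k assume ik: "i \<in> Ca" "k \<in> Ca"
    then have pi: "pa i > 0" "pa k > 0" using pa_pos CaC by auto
    have "mmul Ca A D i k = (\<Sum>j\<in>Ca. if i = j then pa i * D j k else 0)"
      unfolding mmul_def using ik by (intro sum.cong) (auto simp: Ae)
    also have "\<dots> = (if i = k then 1 else 0)" using ik pi finCa by (simp add: D_def)
    finally show "mmul Ca A D i k = (if i = k then 1 else 0)" .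
    have "mmul Ca D A i k = (\<Sum>j\<in>Ca. if i = j then D i i * pa k * (if j = k then 1 else 0) else 0)"
      unfolding mmul_def using ik by (intro sum.cong) (auto simp: Ae D_def)
    also have "\<dots> = (if i = k then 1 else 0)" using ik pi finCa by (simp add: D_def)
    finally show "mmul Ca D A i k = (if i = k then 1 else 0)" .
  qed
  have invB: "\<forall>i\<in>Ca. \<forall>k\<in>Ca. mmul Ca A B i k = (if i = k then 1 else 0)"
    unfolding B_def minv_def using someI[where P = "\<lambda>B. (\<forall>i\<in>Ca. \<forall>k\<in>Ca. mmul Ca A B i k = (if i = k then 1 else 0)) \<and>
              (\<forall>i\<in>Ca. \<forall>k\<in>Ca. mmul Ca B A i k = (if i = k then 1 else 0))", OF invD] by blast
  have Be: "B i k = D i k" if ik: "i \<in> Ca" "k \<in> Ca" for i k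
  proof -
    have pi: "pa i > 0" using pa_pos CaC ik by auto
    have "mmul Ca A B i k = (\<Sum>j\<in>Ca. if i = j then pa i * B j k else 0)"
      unfolding mmul_def using ik by (intro sum.cong) (auto simp: Ae)
    also have "\<dots> = pa i * B i k" using ik finCa by simp
    finally have "pa i * B i k = (if i = k then 1 else 0)" using invB ik by simp
    then show ?thesis using pi unfolding D_def by (auto simp: field_simps)
  qed
  define c0 where "c0 = restrict (\<lambda>j. if j \<in> a then x j else 0) M"
  have c0Ca: "c0 \<in> Ca" unfolding c0_def Ca_def Xcols_def using x unfolding cells_def
    by (auto simp: PiE_iff)
  have c0a: "\<forall>j\<in>a. c0 j = x j" unfolding c0_def using aM by auto
  have c0u: "c = c0" if "c \<in> Ca" "\<forall>j\<in>a. x j = c j" for c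
  proof
    fix j show "c j = c0 j"
      using that aM unfolding Ca_def Xcols_def c0_def
      by (cases "j \<in> M"; cases "j \<in> a") (force simp: PiE_iff extensional_def)+
  qed
  have pac0: "pa c0 = pa x" unfolding pa_def using c0a by (intro prob_ev_cong) auto
  have "Pmat M r p a x y = (\<Sum>c\<in>Ca. X x c * (\<Sum>c'\<in>Ca. B c c' * XtD c' y))"
    unfolding Pmat_def Let_def mmul_def C_def Ca_def X_def XtD_def B_def A_def by simp
  also have "\<dots> = (\<Sum>c\<in>Ca. X x c * (X y c * p y / pa c))"
  proof (intro sum.cong refl)
    fix c assume c: "c \<in> Ca"
    have "(\<Sum>c'\<in>Ca. B c c' * XtD c' y) = (\<Sum>c'\<in>Ca. if c = c' then XtD c' y / pa c else 0)"
      using c by (intro sum.cong) (auto simp: Be D_def)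
    also have "\<dots> = X y c * p y / pa c" using c finCa y XtDe C_def by simp
    finally show "X x c * (\<Sum>c'\<in>Ca. B c c' * XtD c' y) = X x c * (X y c * p y / pa c)" by simp
  qed
  also have "\<dots> = X x c0 * (X y c0 * p y / pa c0)"
    using finCa c0Ca c0u by (intro sum_single) (auto simp: Xe)
  also have "\<dots> = (if \<forall>j\<in>a. y j = x j then p y / pa x else 0)"
    using c0a pac0 by (auto simp: Xe)
  finally show ?thesis unfolding pa_def C_def .
qed

lemma PG_eq:
  fixes M :: "'v set"
  assumes fin: "finite M" and pos: "\<forall>x\<in>cells M r. p x > 0"
    and indep: "completely_independent M r p"
    and tM: "t \<subseteq> M" and hM: "h \<subseteq> M" and th: "t \<inter> h = {}"
    and jh: "\<forall>j\<in>h. jh j \<in> {1..r j}" and aM: "a \<subseteq> M"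
    and x: "x \<in> cells M r" and y: "y \<in> Gcols M t r"
  shows "mmul (cells M r) (Pmat M r p a) (GTHmat M t h jh) x y =
     (if \<forall>j\<in>a \<inter> (t \<union> h). x j = (if j \<in> t then y j else jh j)
      then \<Prod>j\<in>(t \<union> h) - a. prob_ev p (cells M r) (\<lambda>z. z j = (if j \<in> t then y j else jh j))
      else 0)"
proof -
  define C where "C = cells M r"
  define tg where "tg j = (if j \<in> t then y j else jh j)" for j
  define q where "q j v = prob_ev p C (\<lambda>z. z j = v)" for j v
  define pa where "pa = prob_ev p C (\<lambda>z. \<forall>j\<in>a. z j = x j)"
  define E where "E z = ((\<forall>j\<in>a. z j = x j) \<and> (\<forall>j\<in>t\<union>h. z j = tg j))" for z
  have finC: "finite C" unfolding C_def cells_def using fin by (simp add: finite_PiE)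
  have fa: "finite a" using fin aM finite_subset by blast
  have fth: "finite ((t \<union> h) - a)" using fin tM hM finite_subset by blast
  have pa_pos: "pa > 0" unfolding pa_def using x finC pos C_def by (intro prob_ev_pos) auto
  have indep': "prob_ev p C (\<lambda>z. \<forall>j\<in>S. z j = w j) = (\<Prod>j\<in>S. q j (w j))"
    if "S \<subseteq> M" "w \<in> C" for S w
    using indep that unfolding completely_independent_def q_def C_def by blast
  have pa_prod: "pa = (\<Prod>j\<in>a. q j (x j))" unfolding pa_def using indep' aM x C_def by simp
  have "mmul C (Pmat M r p a) (GTHmat M t h jh) x y = (\<Sum>z\<in>C. (if E z then p z else 0) / pa)"
    unfolding mmul_def
  proof (intro sum.cong refl)
    fix z assume z: "z \<in> C"
    show "Pmat M r p a x z * GTHmat M t h jh z y = (if E z then p z else 0) / pa"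
      unfolding P_eq[OF fin aM pos x z[unfolded C_def]] GTH_eq[OF fin tM hM th]
      by (auto simp: E_def tg_def pa_def C_def)
  qed
  also have "\<dots> = prob_ev p C E / pa"
    by (simp add: sum_divide_distrib[symmetric] prob_ev_sum[OF finC])
  also have "\<dots> = (if \<forall>j\<in>a \<inter> (t \<union> h). x j = tg j then \<Prod>j\<in>(t \<union> h) - a. q j (tg j) else 0)"
  proof (cases "\<forall>j\<in>a \<inter> (t \<union> h). x j = tg j")
    case False
    then have "prob_ev p C E = 0" unfolding prob_ev_def E_def by (intro sum.neutral) auto
    then show ?thesis using False by auto
  next
    case True
    define w where "w = restrict (\<lambda>j. if j \<in> a then x j else if j \<in> t \<union> h then tg j else x j) M"
    have wC: "w \<in> C"
      using x y jh unfolding w_def C_def cells_def Gcols_def tg_def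
      by (auto simp: PiE_iff)
    have "prob_ev p C E = prob_ev p C (\<lambda>z. \<forall>j\<in>a \<union> ((t \<union> h) - a). z j = w j)"
      using True aM tM hM unfolding E_def w_def by (intro prob_ev_cong) (auto; blast)
    also have "\<dots> = (\<Prod>j\<in>a \<union> ((t \<union> h) - a). q j (w j))"
      using aM tM hM wC by (intro indep') auto
    also have "\<dots> = (\<Prod>j\<in>a. q j (w j)) * (\<Prod>j\<in>(t \<union> h) - a. q j (w j))"
      using fa fth by (intro prod.union_disjoint) auto
    also have "\<dots> = pa * (\<Prod>j\<in>(t \<union> h) - a. q j (tg j))"
      unfolding pa_prod using aM tM hM unfolding w_def
      by (intro arg_cong2[where f = "(*)"] prod.cong) auto
    finally show ?thesis using True pa_pos by simp
  qed
  finally show ?thesis unfolding C_def tg_def q_def .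
qed

theorem lemma7:
  fixes M :: "'v set" and r :: "'v \<Rightarrow> nat" and p :: "('v \<Rightarrow> nat) \<Rightarrow> real"
    and t h a :: "'v set" and jh :: "'v \<Rightarrow> nat"
  assumes "finite M"
    and pos: "\<forall>x\<in>cells M r. p x > 0"
    and sum1: "(\<Sum>x\<in>cells M r. p x) = 1"
    and indep: "completely_independent M r p"
    and "t \<subseteq> M" and "h \<subseteq> M" and "t \<inter> h = {}"
    and "\<forall>j\<in>h. jh j \<in> {1..r j}"
    and "a \<subseteq> M"
  shows "(\<exists>C. \<forall>x\<in>cells M r. \<forall>y\<in>Gcols M t r.
            mmul (cells M r) (Pmat M r p a) (GTHmat M t h jh) x y
            = mmul (Gcols M (a \<inter> (t \<union> h)) r) (Gmat M (a \<inter> (t \<union> h))) C x y)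
       \<and> (t \<subseteq> a \<and> a \<inter> h = {} \<longrightarrow>
            (\<forall>x\<in>cells M r. \<forall>y\<in>Gcols M t r.
               mmul (cells M r) (Pmat M r p a) (GTHmat M t h jh) x y
               = Gmat M t x y * prob_ev p (cells M r) (\<lambda>z. \<forall>j\<in>h. z j = jh j)))"
proof -
  note PG = PG_eq[OF assms(1) pos indep assms(5-9)]
  define tg where "tg y j = (if j \<in> t then y j else jh j)" for y :: "'v \<Rightarrow> nat" and j
  define Q where "Q y = (\<Prod>j\<in>(t \<union> h) - a. prob_ev p (cells M r) (\<lambda>z. z j = tg y j))" for y
  define R where "R = a \<inter> (t \<union> h)"
  have RM: "R \<subseteq> M" using assms(9) unfolding R_def by auto
  have finG: "finite (Gcols M R r)" unfolding Gcols_def using assms(1) by (simp add: finite_PiE)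
  define Cm where "Cm c y = (if \<forall>j\<in>R. c j = tg y j then Q y else 0)" for c y
  have A: "mmul (cells M r) (Pmat M r p a) (GTHmat M t h jh) x y
            = mmul (Gcols M R r) (Gmat M R) Cm x y" if x: "x \<in> cells M r" and y: "y \<in> Gcols M t r" for x y
  proof (cases "\<forall>j\<in>R. x j = tg y j")
    case True
    define c0 where "c0 = restrict (\<lambda>j. if j \<in> R then x j else 0) M"
    have c0G: "c0 \<in> Gcols M R r"
      using True x y assms(8) RM unfolding c0_def Gcols_def cells_def tg_def R_def
      by (auto simp: PiE_iff)
    have c0u: "c = c0" if "c \<in> Gcols M R r" "\<forall>j\<in>R. x j = c j" for c
    proof
      fix j show "c j = c0 j"
        using that RM unfolding Gcols_def c0_def
        by (cases "j \<in> M"; cases "j \<in> R") (force simp: PiE_iff extensional_def)+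
    qed
    have "mmul (Gcols M R r) (Gmat M R) Cm x y = Gmat M R x c0 * Cm c0 y"
      unfolding mmul_def using finG c0G c0u
      by (intro sum_single) (auto simp: Gmat_eq[OF assms(1) RM])
    also have "\<dots> = Q y" using True RM
      by (auto simp: Gmat_eq[OF assms(1) RM] Cm_def c0_def)
    finally show ?thesis using PG[OF x y] True unfolding Q_def tg_def R_def by simp
  next
    case False
    have "mmul (Gcols M R r) (Gmat M R) Cm x y = 0"
      unfolding mmul_def using False
      by (intro sum.neutral) (auto simp: Gmat_eq[OF assms(1) RM] Cm_def)
    then show ?thesis using PG[OF x y] False unfolding Q_def tg_def R_def by simp
  qed
  have B: "mmul (cells M r) (Pmat M r p a) (GTHmat M t h jh) x y
               = Gmat M t x y * prob_ev p (cells M r) (\<lambda>z. \<forall>j\<in>h. z j = jh j)"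
    if ta: "t \<subseteq> a" and ah: "a \<inter> h = {}" and x: "x \<in> cells M r" and y: "y \<in> Gcols M t r" for x y
  proof -
    define w where "w = restrict (\<lambda>j. if j \<in> h then jh j else 0) M"
    have wC: "w \<in> cells M r" using assms(8) unfolding w_def cells_def by (auto simp: PiE_iff)
    have "prob_ev p (cells M r) (\<lambda>z. \<forall>j\<in>h. z j = jh j) = prob_ev p (cells M r) (\<lambda>z. \<forall>j\<in>h. z j = w j)"
      using assms(6) unfolding w_def by (intro prob_ev_cong) auto
    also have "\<dots> = (\<Prod>j\<in>h. prob_ev p (cells M r) (\<lambda>z. z j = w j))"
      using indep assms(6) wC unfolding completely_independent_def by blast
    also have "\<dots> = (\<Prod>j\<in>h. prob_ev p (cells M r) (\<lambda>z. z j = jh j))"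
      using assms(6) unfolding w_def by (intro prod.cong) auto
    finally have pe: "prob_ev p (cells M r) (\<lambda>z. \<forall>j\<in>h. z j = jh j) = \<dots>" .
    have e1: "a \<inter> (t \<union> h) = t" "(t \<union> h) - a = h" using ta ah assms(7) by auto
    have e2: "(\<Prod>j\<in>h. prob_ev p (cells M r) (\<lambda>z. z j = (if j \<in> t then y j else jh j)))
        = (\<Prod>j\<in>h. prob_ev p (cells M r) (\<lambda>z. z j = jh j))"
      using assms(7) by (intro prod.cong) auto
    show ?thesis unfolding PG[OF x y] e1 e2 pe Gmat_eq[OF assms(1) assms(5)] by auto
  qed
  show ?thesis
    using A B unfolding R_def by blast
qed

end
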